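(* Let $\Gamma$ be a weighted digraph with vertex set $V$ and normalized matrix of maximum out-forests $\bar J$; let $\widetilde K$ be the union of the vertex sets of all basis bicomponents of $\Gamma$; for $k\in\widetilde K$ let $K(k)$ be the basis bicomponent containing $k$ and $K^+(k)$ the set of vertices reachable by directed paths from $K(k)$ and unreachable from all other basis bicomponents. Then for all $i,j\in V$: (1) $\bar J_{ii}\ge\bar J_{ji}$; (2) if $\bar J_{ii}>\bar J_{ji}$, then $i\in\widetilde K$ and $j\notin K^+(i)$, and $\Gamma$ contains no directed path from $j$ to $i$; (3) if $\bar J_{ii}>\bar J_{ji}>0$, then $j\notin\widetilde K$, and consequently $j$ is not a root in any maximum out-forest of $\Gamma$; (4) if $\bar J_{ij}>0$, then $\bar J_{ii}=\bar J_{ji}$.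
   Context: A weighted digraph $\Gamma$ has no loops and each arc has a positive weight. A diverging tree is a rooted directed tree with directed paths from its root to all its other vertices; an out-forest is a spanning subgraph whose weak components are diverging trees; a maximum out-forest is one with the maximum number of arcs. The weight of a subgraph is the product of its arc weights. $\bar J_{ij}$ is the total weight of the maximum out-forests of $\Gamma$ in which $i$ belongs to the tree rooted at $j$, divided by the total weight of all maximum out-forests. A basis bicomponent is a strong component into which no arc enters from outside it. *)

theory Defs
  imports Complex_Main
begin

definition wdigraph :: "'a set \<Rightarrow> ('a \<times> 'a) set \<Rightarrow> ('a \<times> 'a \<Rightarrow> real) \<Rightarrow> bool" where
  "wdigraph V A w \<longleftrightarrow> finite V \<and> A \<subseteq> V \<times> V \<and> (\<forall>v. (v, v) \<notin> A) \<and> (\<forall>e\<in>A. w e > 0)"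

definition weak_comp :: "'a set \<Rightarrow> ('a \<times> 'a) set \<Rightarrow> 'a \<Rightarrow> 'a set" where
  "weak_comp V F v = {u \<in> V. (v, u) \<in> (F \<union> F\<inverse>)\<^sup>*}"

text \<open>The arcs of F on the vertex set C form a diverging tree: the underlying
  graph is a tree (connected, which follows from reachability from the root,
  with |C| - 1 arcs) and there is a root from which every vertex of C is
  reachable by a directed path.\<close>
definition diverging_tree :: "'a set \<Rightarrow> ('a \<times> 'a) set \<Rightarrow> bool" where
  "diverging_tree C F \<longleftrightarrow> finite C \<and> F \<subseteq> C \<times> C \<and> card F + 1 = card C \<and>
     (\<exists>r\<in>C. \<forall>u\<in>C. (r, u) \<in> F\<^sup>*)"

definition out_forest :: "'a set \<Rightarrow> ('a \<times> 'a) set \<Rightarrow> ('a \<times> 'a) set \<Rightarrow> bool" where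
  "out_forest V A F \<longleftrightarrow> F \<subseteq> A \<and>
     (\<forall>v\<in>V. diverging_tree (weak_comp V F v) (F \<inter> (weak_comp V F v \<times> weak_comp V F v)))"

definition max_out_forest :: "'a set \<Rightarrow> ('a \<times> 'a) set \<Rightarrow> ('a \<times> 'a) set \<Rightarrow> bool" where
  "max_out_forest V A F \<longleftrightarrow> out_forest V A F \<and> (\<forall>G. out_forest V A G \<longrightarrow> card G \<le> card F)"

text \<open>In the out-forest F, vertex i belongs to the tree rooted at j
  (the root of a diverging tree is the vertex from which all vertices of its
  weak component are reachable).\<close>
definition in_tree_rooted :: "'a set \<Rightarrow> ('a \<times> 'a) set \<Rightarrow> 'a \<Rightarrow> 'a \<Rightarrow> bool" where
  "in_tree_rooted V F i j \<longleftrightarrow> i \<in> V \<and> j \<in> V \<and> i \<in> weak_comp V F j \<and>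
     (\<forall>u\<in>weak_comp V F j. (j, u) \<in> F\<^sup>*)"

definition is_root :: "'a set \<Rightarrow> ('a \<times> 'a) set \<Rightarrow> 'a \<Rightarrow> bool" where
  "is_root V F j \<longleftrightarrow> in_tree_rooted V F j j"

definition subgraph_weight :: "('a \<times> 'a \<Rightarrow> real) \<Rightarrow> ('a \<times> 'a) set \<Rightarrow> real" where
  "subgraph_weight w F = (\<Prod>e\<in>F. w e)"

definition Jbar :: "'a set \<Rightarrow> ('a \<times> 'a) set \<Rightarrow> ('a \<times> 'a \<Rightarrow> real) \<Rightarrow> 'a \<Rightarrow> 'a \<Rightarrow> real" where
  "Jbar V A w i j =
     (\<Sum>F\<in>{F. max_out_forest V A F \<and> in_tree_rooted V F i j}. subgraph_weight w F) /
     (\<Sum>F\<in>{F. max_out_forest V A F}. subgraph_weight w F)"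

definition strong_comp :: "'a set \<Rightarrow> ('a \<times> 'a) set \<Rightarrow> 'a \<Rightarrow> 'a set" where
  "strong_comp V A v = {u \<in> V. (v, u) \<in> A\<^sup>* \<and> (u, v) \<in> A\<^sup>*}"

definition basis_bicomp :: "'a set \<Rightarrow> ('a \<times> 'a) set \<Rightarrow> 'a set \<Rightarrow> bool" where
  "basis_bicomp V A K \<longleftrightarrow> (\<exists>v\<in>V. K = strong_comp V A v) \<and>
     (\<forall>(u, v)\<in>A. v \<in> K \<longrightarrow> u \<in> K)"

definition Ktilde :: "'a set \<Rightarrow> ('a \<times> 'a) set \<Rightarrow> 'a set" where
  "Ktilde V A = \<Union>{K. basis_bicomp V A K}"

definition Kplus :: "'a set \<Rightarrow> ('a \<times> 'a) set \<Rightarrow> 'a \<Rightarrow> 'a set" where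
  "Kplus V A k = {v \<in> V. (\<exists>u\<in>strong_comp V A k. (u, v) \<in> A\<^sup>*) \<and>
     (\<forall>K'. basis_bicomp V A K' \<and> K' \<noteq> strong_comp V A k \<longrightarrow> (\<forall>u\<in>K'. (u, v) \<notin> A\<^sup>*))}"

end

theory Submission
  imports Defs
begin

lemma W_sym:
  assumes "(x, y) \<in> (F \<union> F\<inverse>)\<^sup>*"
  shows "(y, x) \<in> (F \<union> F\<inverse>)\<^sup>*"
proof -
  have "(y, x) \<in> ((F \<union> F\<inverse>)\<inverse>)\<^sup>*"
    using assms by (simp add: rtrancl_converse)
  moreover have "(F \<union> F\<inverse>)\<inverse> = F \<union> F\<inverse>" by auto
  ultimately show ?thesis by simp
qed

lemma same_root:
  assumes "(x, y) \<in> (F \<union> F\<inverse>)\<^sup>*" "(r, x) \<in> F\<^sup>*" "r \<notin> snd ` F" "inj_on snd F"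
  shows "(r, y) \<in> F\<^sup>*"
  using assms(1)
proof (induction rule: rtrancl_induct)
  case base then show ?case using assms(2) .
next
  case (step y z)
  from step.hyps(2) show ?case
  proof
    assume "(y,z) \<in> F" then show ?thesis using step.IH by (meson rtrancl.rtrancl_into_rtrancl)
  next
    assume "(y,z) \<in> F\<inverse>"
    hence zy: "(z,y) \<in> F" by simp
    show ?thesis
    proof (cases "r = y")
      case True then have "r \<in> snd ` F" using zy by force
      with assms(3) show ?thesis by simp
    next
      case False
      with step.IH have "(r,y) \<in> F\<^sup>+" by (simp add: rtrancl_eq_or_trancl)
      then obtain y' where y': "(r,y') \<in> F\<^sup>*" "(y',y) \<in> F" by (auto dest: tranclD2)
      have "y' = z" using inj_onD[OF assms(4), of "(y',y)" "(z,y)"] zy y'(2) by auto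
      then show ?thesis using y' by simp
    qed
  qed
qed

lemma comp_facts:
  assumes "out_forest V A F" "v \<in> V"
  defines "C \<equiv> weak_comp V F v"
  shows "\<exists>r\<in>C. inj_on snd (F \<inter> C \<times> C) \<and> r \<notin> snd ` (F \<inter> C \<times> C) \<and> (\<forall>u\<in>C. (r,u) \<in> F\<^sup>*)"
proof -
  let ?FC = "F \<inter> C \<times> C"
  from assms have dt: "diverging_tree C ?FC" unfolding out_forest_def C_def by blast
  then obtain r where r: "r \<in> C" "\<forall>u\<in>C. (r,u) \<in> ?FC\<^sup>*" and fin: "finite C"
    and cardeq: "card ?FC + 1 = card C" and sub: "?FC \<subseteq> C \<times> C"
    unfolding diverging_tree_def by blast
  have finFC: "finite ?FC" using fin finite_subset[OF sub] by blast
  have s1: "C - {r} \<subseteq> snd ` ?FC"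
  proof
    fix u assume u: "u \<in> C - {r}"
    then have "(r,u) \<in> ?FC\<^sup>+" using r by (auto simp: rtrancl_eq_or_trancl)
    then obtain y where "(y,u) \<in> ?FC" by (auto dest: tranclD2)
    then show "u \<in> snd ` ?FC" by force
  qed
  have c1: "card (C - {r}) = card ?FC" using cardeq r fin by simp
  have c2: "card (C - {r}) \<le> card (snd ` ?FC)" using s1 finFC by (intro card_mono) auto
  have c3: "card (snd ` ?FC) \<le> card ?FC" using card_image_le finFC by blast
  have inj: "inj_on snd ?FC" using c1 c2 c3 finFC by (intro eq_card_imp_inj_on) auto
  have nr: "r \<notin> snd ` ?FC"
  proof
    assume "r \<in> snd ` ?FC"
    then have "C \<subseteq> snd ` ?FC" using s1 by auto
    then have "card C \<le> card (snd ` ?FC)" using finFC by (intro card_mono) auto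
    then show False using c3 cardeq by simp
  qed
  have "\<forall>u\<in>C. (r,u) \<in> F\<^sup>*" using r rtrancl_mono[of ?FC F] by blast
  then show ?thesis using r inj nr by blast
qed

lemma out_forest_PF:
  assumes g: "wdigraph V A w" and of: "out_forest V A F"
  shows "F \<subseteq> A \<and> inj_on snd F \<and> (\<forall>v\<in>V. \<exists>r\<in>V. r \<notin> snd ` F \<and> (r,v) \<in> F\<^sup>*)"
proof -
  have FA: "F \<subseteq> A" using of unfolding out_forest_def by blast
  have AV: "A \<subseteq> V \<times> V" using g unfolding wdigraph_def by blast
  have inj: "inj_on snd F"
  proof (rule inj_onI)
    fix x y assume x: "x \<in> F" and y: "y \<in> F" and eq: "snd x = snd y"
    obtain a b where xab: "x = (a,b)" by (cases x)
    obtain a' where ya: "y = (a',b)" using eq xab by (cases y) auto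
    have bV: "b \<in> V" "a \<in> V" "a' \<in> V" using x y xab ya FA AV by auto
    define C where "C = weak_comp V F b"
    have "(b,a) \<in> (F \<union> F\<inverse>)\<^sup>*" "(b,a') \<in> (F \<union> F\<inverse>)\<^sup>*" using x y xab ya
      by (auto intro: r_into_rtrancl)
    then have "a \<in> C" "b \<in> C" "a' \<in> C" using bV unfolding C_def weak_comp_def by auto
    then have "x \<in> F \<inter> C \<times> C" "y \<in> F \<inter> C \<times> C" using x y xab ya by auto
    moreover obtain r where "inj_on snd (F \<inter> C \<times> C)" using comp_facts[OF of bV(1)] C_def by blast
    ultimately show "x = y" using eq by (auto dest: inj_onD)
  qed
  have "\<forall>v\<in>V. \<exists>r\<in>V. r \<notin> snd ` F \<and> (r,v) \<in> F\<^sup>*"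
  proof
    fix v assume v: "v \<in> V"
    define C where "C = weak_comp V F v"
    obtain r where r: "r \<in> C" "r \<notin> snd ` (F \<inter> C \<times> C)" "\<forall>u\<in>C. (r,u) \<in> F\<^sup>*"
      using comp_facts[OF of v] C_def by blast
    have vC: "v \<in> C" using v unfolding C_def weak_comp_def by auto
    have rV: "r \<in> V" using r(1) unfolding C_def weak_comp_def by auto
    have "r \<notin> snd ` F"
    proof
      assume "r \<in> snd ` F"
      then obtain a where a: "(a,r) \<in> F" by force
      have "(v,r) \<in> (F \<union> F\<inverse>)\<^sup>*" using r(1) unfolding C_def weak_comp_def by auto
      moreover have "(r,a) \<in> (F \<union> F\<inverse>)\<^sup>*" using a by (auto intro: r_into_rtrancl)
      ultimately have "(v,a) \<in> (F \<union> F\<inverse>)\<^sup>*" by (rule rtrancl_trans)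
      moreover have "a \<in> V" using a FA AV by auto
      ultimately have "a \<in> C" unfolding C_def weak_comp_def by auto
      then have "r \<in> snd ` (F \<inter> C \<times> C)" using a r(1) by force
      with r(2) show False by simp
    qed
    then show "\<exists>r\<in>V. r \<notin> snd ` F \<and> (r,v) \<in> F\<^sup>*" using rV r(3) vC by blast
  qed
  then show ?thesis using FA inj by blast
qed

lemma PF_out_forest:
  assumes g: "wdigraph V A w" and FA: "F \<subseteq> A" and inj: "inj_on snd F"
    and rt: "\<forall>v\<in>V. \<exists>r. r \<notin> snd ` F \<and> (r,v) \<in> F\<^sup>*"
  shows "out_forest V A F"
  unfolding out_forest_def
proof (intro conjI ballI FA)
  fix v assume v: "v \<in> V"
  have AV: "A \<subseteq> V \<times> V" and finV: "finite V" using g unfolding wdigraph_def by auto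
  define C where "C = weak_comp V F v"
  let ?FC = "F \<inter> C \<times> C"
  obtain r where r: "r \<notin> snd ` F" "(r,v) \<in> F\<^sup>*" using rt v by blast
  have rV: "r \<in> V"
  proof (cases "r = v")
    case True with v show ?thesis by simp
  next
    case False
    then have "(r,v) \<in> F\<^sup>+" using r(2) by (auto simp: rtrancl_eq_or_trancl)
    then obtain z where "(r,z) \<in> F" by (auto dest: tranclD)
    then show ?thesis using FA AV by auto
  qed
  have "(r,v) \<in> (F \<union> F\<inverse>)\<^sup>*" using r(2) rtrancl_mono[of F "F \<union> F\<inverse>"] by blast
  then have "(v,r) \<in> (F \<union> F\<inverse>)\<^sup>*" by (rule W_sym)
  then have rC: "r \<in> C" unfolding C_def weak_comp_def using rV by simp
  have allC: "\<forall>u\<in>C. (r,u) \<in> F\<^sup>*"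
  proof
    fix u assume "u \<in> C"
    then have "(v,u) \<in> (F \<union> F\<inverse>)\<^sup>*" unfolding C_def weak_comp_def by auto
    then show "(r,u) \<in> F\<^sup>*" using same_root[OF _ r(2) r(1) inj] by blast
  qed
  have closed: "\<And>x y. x \<in> C \<Longrightarrow> (x,y) \<in> F \<Longrightarrow> y \<in> C"
  proof -
    fix x y assume xy: "x \<in> C" "(x,y) \<in> F"
    then have "(v,x) \<in> (F \<union> F\<inverse>)\<^sup>*" "y \<in> V" using FA AV unfolding C_def weak_comp_def by auto
    then have "(v,y) \<in> (F \<union> F\<inverse>)\<^sup>*" using xy(2) by (meson UnI1 rtrancl.rtrancl_into_rtrancl)
    then show "y \<in> C" using \<open>y \<in> V\<close> unfolding C_def weak_comp_def by auto
  qed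
  have inC: "\<forall>u\<in>C. (r,u) \<in> ?FC\<^sup>*"
  proof
    fix u assume "u \<in> C"
    have "(r,u) \<in> F\<^sup>*" using allC \<open>u \<in> C\<close> by blast
    then have "(r,u) \<in> ?FC\<^sup>* \<and> u \<in> C"
    proof (induction rule: rtrancl_induct)
      case base then show ?case using rC by simp
    next
      case (step y z)
      then have zC: "z \<in> C" using closed by blast
      have "(y,z) \<in> ?FC" using step zC by simp
      then show ?case using step zC by (meson rtrancl.rtrancl_into_rtrancl)
    qed
    then show "(r,u) \<in> ?FC\<^sup>*" by simp
  qed
  have finC: "finite C" using finV unfolding C_def weak_comp_def by auto
  have img: "snd ` ?FC = C - {r}"
  proof
    show "snd ` ?FC \<subseteq> C - {r}" using r(1) by force
    show "C - {r} \<subseteq> snd ` ?FC"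
    proof
      fix u assume u: "u \<in> C - {r}"
      then have "(r,u) \<in> ?FC\<^sup>+" using inC by (auto simp: rtrancl_eq_or_trancl)
      then obtain y where "(y,u) \<in> ?FC" by (auto dest: tranclD2)
      then show "u \<in> snd ` ?FC" by force
    qed
  qed
  have "inj_on snd ?FC" using inj inj_on_subset by blast
  then have "card ?FC = card (snd ` ?FC)" by (simp add: card_image)
  also have "\<dots> = card C - 1" using img rC finC by simp
  finally have "card ?FC + 1 = card C" using rC finC card_gt_0_iff[of C] by auto
  then show "diverging_tree (weak_comp V F v) (F \<inter> weak_comp V F v \<times> weak_comp V F v)"
    unfolding diverging_tree_def C_def[symmetric] using finC rC inC by auto
qed

lemma PF_acyclic:
  assumes inj: "inj_on snd F" and FV: "F \<subseteq> V \<times> V"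
    and rt: "\<forall>v\<in>V. \<exists>r. r \<notin> snd ` F \<and> (r,v) \<in> F\<^sup>*"
  shows "acyclic F"
  unfolding acyclic_def
proof
  fix x show "(x,x) \<notin> F\<^sup>+"
  proof
    assume cyc: "(x,x) \<in> F\<^sup>+"
    then obtain z where "(x,z) \<in> F" by (auto dest: tranclD)
    then have "x \<in> V" using FV by auto
    then obtain r where r: "r \<notin> snd ` F" "(r,x) \<in> F\<^sup>*" using rt by blast
    have "\<And>v. (r,v) \<in> F\<^sup>* \<Longrightarrow> (v,v) \<notin> F\<^sup>+"
    proof -
      fix v assume "(r,v) \<in> F\<^sup>*"
      then show "(v,v) \<notin> F\<^sup>+"
      proof (induction rule: rtrancl_induct)
        case base
        show ?case
        proof
          assume "(r,r) \<in> F\<^sup>+"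
          then obtain y where "(y,r) \<in> F" by (auto dest: tranclD2)
          then show False using r(1) by force
        qed
      next
        case (step u v)
        show ?case
        proof
          assume "(v,v) \<in> F\<^sup>+"
          then obtain y where y: "(v,y) \<in> F\<^sup>*" "(y,v) \<in> F" by (auto dest: tranclD2)
          have "y = u" using inj_onD[OF inj, of "(y,v)" "(u,v)"] y(2) step.hyps(2) by auto
          then have "(u,u) \<in> F\<^sup>+" using step.hyps(2) y(1) by (meson rtrancl_into_trancl2)
          then show False using step.IH by simp
        qed
      qed
    qed
    then show False using r(2) cyc by blast
  qed
qed

lemma acyclic_roots:
  assumes "finite F" "acyclic F"
  shows "\<exists>r. r \<notin> snd ` F \<and> (r,v) \<in> F\<^sup>*"
proof -
  have wf: "wf F" using assms finite_acyclic_wf by blast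
  show ?thesis
  proof (induction v rule: wf_induct[OF wf])
    case (1 v)
    show ?case
    proof (cases "v \<in> snd ` F")
      case False then show ?thesis by blast
    next
      case True
      then obtain u where u: "(u,v) \<in> F" by force
      then obtain r where "r \<notin> snd ` F" "(r,u) \<in> F\<^sup>*" using 1 by blast
      then show ?thesis using u by (meson rtrancl.rtrancl_into_rtrancl)
    qed
  qed
qed

lemma crossing:
  assumes "(x,r) \<in> A\<^sup>*" "x \<notin> T" "r \<in> T"
  shows "\<exists>a b. (a,b) \<in> A \<and> a \<notin> T \<and> b \<in> T"
  using assms
proof (induction rule: rtrancl_induct)
  case base then show ?case by simp
next
  case (step y z)
  show ?case
  proof (cases "y \<in> T")
    case True then show ?thesis using step by blast
  next
    case False then show ?thesis using step by blast
  qed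
qed

lemma improve:
  assumes finA: "finite A"
    and "card {v. (r,v) \<in> F\<^sup>*} = n" "F \<subseteq> A" "inj_on snd F" "acyclic F"
    "r \<notin> snd ` F" "(x,r) \<in> A\<^sup>*" "(r,x) \<notin> F\<^sup>*" "finite {v. (r,v) \<in> F\<^sup>*}"
  shows "\<exists>G. G \<subseteq> A \<and> inj_on snd G \<and> acyclic G \<and> card G > card F"
  using assms(2-)
proof (induction n arbitrary: F rule: less_induct)
  case (less n F)
  let ?T = "{v. (r,v) \<in> F\<^sup>*}"
  have finF: "finite F" using less.prems(2) finA finite_subset by blast
  have "x \<notin> ?T" "r \<in> ?T" using less.prems by auto
  then obtain a b where ab: "(a,b) \<in> A" "a \<notin> ?T" "b \<in> ?T" using crossing[OF less.prems(6)] by blast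
  show ?case
  proof (cases "b = r")
    case True
    let ?G = "insert (a,r) F"
    have "(a,r) \<notin> F" using less.prems(5) by force
    then have "card ?G = card F + 1" using finF by simp
    moreover have "?G \<subseteq> A" using ab True less.prems(2) by auto
    moreover have "inj_on snd ?G"
    proof -
      have "r \<notin> snd ` (F - {(a,r)})" using less.prems(5) by blast
      then show ?thesis using less.prems(3) by simp
    qed
    moreover have "acyclic ?G" using less.prems(4) ab(2) by simp
    ultimately show ?thesis by (intro exI[of _ ?G]) auto
  next
    case False
    then have "(r,b) \<in> F\<^sup>+" using ab(3) by (auto simp: rtrancl_eq_or_trancl)
    then obtain p where p: "(r,p) \<in> F\<^sup>*" "(p,b) \<in> F" by (auto dest: tranclD2)
    have ap: "a \<noteq> p" using p(1) ab(2) by auto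
    let ?F' = "F - {(p,b)}"
    let ?G = "insert (a,b) ?F'"
    have uniq: "\<And>q. (q,b) \<in> F \<Longrightarrow> q = p"
      using inj_onD[OF less.prems(3), of _ "(p,b)"] p(2) by auto
    have abF: "(a,b) \<notin> ?F'" using uniq ap by auto
    have cpos: "card F > 0" using finF p(2) card_gt_0_iff by blast
    have cardG: "card ?G = card F" using abF finF p(2) cpos
      by (simp add: card_Diff_singleton)
    have GA: "?G \<subseteq> A" using ab(1) less.prems(2) by auto
    have injF': "inj_on snd ?F'" using less.prems(3) inj_on_diff by blast
    have "b \<notin> snd ` (?F' - {(a,b)})" using uniq by force
    then have injG: "inj_on snd ?G" using injF' by simp
    have "(b,a) \<notin> ?F'\<^sup>*"
    proof
      assume "(b,a) \<in> ?F'\<^sup>*"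
      then have "(b,a) \<in> F\<^sup>*" using rtrancl_mono[of ?F' F] by blast
      then have "(r,a) \<in> F\<^sup>*" using ab(3) by simp
      then show False using ab(2) by simp
    qed
    moreover have "acyclic ?F'" using less.prems(4) acyclic_subset by blast
    ultimately have acG: "acyclic ?G" by simp
    have rG: "r \<notin> snd ` ?G" using less.prems(5) False by force
    have TG: "{v. (r,v) \<in> ?G\<^sup>*} \<subseteq> ?T - {b}"
    proof
      fix v assume "v \<in> {v. (r,v) \<in> ?G\<^sup>*}"
      then have "(r,v) \<in> ?G\<^sup>*" by simp
      then have "v \<in> ?T \<and> v \<noteq> b"
      proof (induction rule: rtrancl_induct)
        case base then show ?case using False by simp
      next
        case (step u v')
        show ?case
        proof (cases "(u,v') = (a,b)")
          case True then show ?thesis using step ab(2) by simp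
        next
          case nab: False
          then have uv: "(u,v') \<in> F" "(u,v') \<noteq> (p,b)" using step.hyps(2) by auto
          have "v' \<in> ?T" using uv(1) step.IH by (auto intro: rtrancl_into_rtrancl)
          moreover have "v' \<noteq> b" using uv uniq by auto
          ultimately show ?thesis by simp
        qed
      qed
      then show "v \<in> ?T - {b}" by simp
    qed
    have finTG: "finite {v. (r,v) \<in> ?G\<^sup>*}" using TG less.prems(8) finite_subset by blast
    have "card {v. (r,v) \<in> ?G\<^sup>*} < n"
    proof -
      have "card {v. (r,v) \<in> ?G\<^sup>*} \<le> card (?T - {b})" using TG less.prems(8) by (intro card_mono) auto
      also have "\<dots> < card ?T" using less.prems(8) ab(3) by (intro card_Diff1_less)
      finally show ?thesis using less.prems(1) by simp
    qed
    moreover have "(r,x) \<notin> ?G\<^sup>*" using TG less.prems(7) by blast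
    ultimately obtain G' where "G' \<subseteq> A \<and> inj_on snd G' \<and> acyclic G' \<and> card G' > card ?G"
      using less.IH[OF _ refl GA injG acG rG less.prems(6) _ finTG] by blast
    then show ?thesis using cardG by auto
  qed
qed

lemma maxM:
  assumes g: "wdigraph V A w" and mF: "max_out_forest V A F"
    and rV: "r \<in> V" and rr: "r \<notin> snd ` F" and xr: "(x,r) \<in> A\<^sup>*"
  shows "(r,x) \<in> F\<^sup>*"
proof (rule ccontr)
  assume nx: "(r,x) \<notin> F\<^sup>*"
  have finV: "finite V" and AV: "A \<subseteq> V \<times> V" using g unfolding wdigraph_def by auto
  have finA: "finite A" using finV AV finite_subset by blast
  have of: "out_forest V A F" using mF unfolding max_out_forest_def by blast
  from out_forest_PF[OF g of] have FA: "F \<subseteq> A" and inj: "inj_on snd F"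
    and rt: "\<forall>v\<in>V. \<exists>r. r \<notin> snd ` F \<and> (r,v) \<in> F\<^sup>*" by blast+
  have ac: "acyclic F" using PF_acyclic[OF inj _ rt] FA AV by blast
  have "{v. (r,v) \<in> F\<^sup>*} \<subseteq> insert r V"
  proof
    fix v assume "v \<in> {v. (r,v) \<in> F\<^sup>*}"
    then have "(r,v) \<in> F\<^sup>*" by simp
    then show "v \<in> insert r V"
      by (cases rule: rtranclE) (use FA AV in auto)
  qed
  then have finT: "finite {v. (r,v) \<in> F\<^sup>*}" using finV finite_subset by blast
  obtain G where G: "G \<subseteq> A" "inj_on snd G" "acyclic G" "card G > card F"
    using improve[OF finA refl FA inj ac rr xr nx finT] by blast
  have finG: "finite G" using G(1) finA finite_subset by blast
  have "out_forest V A G"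
    using PF_out_forest[OF g G(1) G(2)] acyclic_roots[OF finG G(3)] by blast
  then have "card G \<le> card F" using mF unfolding max_out_forest_def by blast
  with G(4) show False by simp
qed

lemma root_notin:
  assumes g: "wdigraph V A w" and of: "out_forest V A F" and ir: "in_tree_rooted V F i i"
  shows "i \<notin> snd ` F"
proof
  assume "i \<in> snd ` F"
  then obtain a where a: "(a,i) \<in> F" by force
  have AV: "A \<subseteq> V \<times> V" using g unfolding wdigraph_def by auto
  from out_forest_PF[OF g of] have FA: "F \<subseteq> A" and inj: "inj_on snd F"
    and rt: "\<forall>v\<in>V. \<exists>r. r \<notin> snd ` F \<and> (r,v) \<in> F\<^sup>*" by blast+
  have ac: "acyclic F" using PF_acyclic[OF inj _ rt] FA AV by blast
  have "a \<in> V" using a FA AV by auto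
  moreover have "(i,a) \<in> (F \<union> F\<inverse>)\<^sup>*" using a by (auto intro: r_into_rtrancl)
  ultimately have "(i,a) \<in> F\<^sup>*" using ir unfolding in_tree_rooted_def weak_comp_def by auto
  then have "(i,i) \<in> F\<^sup>+" using a by (meson rtrancl_into_trancl1)
  then show False using ac unfolding acyclic_def by blast
qed

lemma tree_of:
  assumes g: "wdigraph V A w" and of: "out_forest V A F" and iV: "i \<in> V" and jV: "j \<in> V"
    and ir: "i \<notin> snd ` F" and ij: "(i,j) \<in> F\<^sup>*"
  shows "in_tree_rooted V F j i"
proof -
  from out_forest_PF[OF g of] have inj: "inj_on snd F" by blast
  have "(i,j) \<in> (F \<union> F\<inverse>)\<^sup>*" using ij rtrancl_mono[of F "F \<union> F\<inverse>"] by blast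
  moreover have "\<forall>u. (i,u) \<in> (F \<union> F\<inverse>)\<^sup>* \<longrightarrow> (i,u) \<in> F\<^sup>*"
    using same_root[OF _ _ ir inj] by blast
  ultimately show ?thesis unfolding in_tree_rooted_def weak_comp_def using iV jV by auto
qed

lemma basis:
  assumes g: "wdigraph V A w" and mF: "max_out_forest V A F"
    and rV: "r \<in> V" and rr: "r \<notin> snd ` F"
  shows "basis_bicomp V A (strong_comp V A r)"
  unfolding basis_bicomp_def
proof (intro conjI)
  show "\<exists>v\<in>V. strong_comp V A r = strong_comp V A v" using rV by blast
  have AV: "A \<subseteq> V \<times> V" using g unfolding wdigraph_def by auto
  have FA: "F \<subseteq> A" using mF unfolding max_out_forest_def out_forest_def by blast
  show "\<forall>(u, v)\<in>A. v \<in> strong_comp V A r \<longrightarrow> u \<in> strong_comp V A r"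
  proof (clarify)
    fix u v assume uv: "(u,v) \<in> A" and v: "v \<in> strong_comp V A r"
    then have "(u,r) \<in> A\<^sup>*" unfolding strong_comp_def by (auto intro: converse_rtrancl_into_rtrancl)
    then have "(r,u) \<in> F\<^sup>*" using maxM[OF g mF rV rr] by blast
    then have "(r,u) \<in> A\<^sup>*" using rtrancl_mono[OF FA] by blast
    moreover have "u \<in> V" using uv AV by auto
    ultimately show "u \<in> strong_comp V A r" using \<open>(u,r) \<in> A\<^sup>*\<close> unfolding strong_comp_def by auto
  qed
qed

lemma basis_closed:
  assumes "basis_bicomp V A K" "(x,y) \<in> A\<^sup>*" "y \<in> K"
  shows "x \<in> K"
  using assms(2,3)
proof (induction rule: converse_rtrancl_induct)
  case base then show ?case .
next
  case (step x z)
  then show ?case using assms(1) unfolding basis_bicomp_def by blast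
qed

theorem theorem3:
  fixes V :: "'a set" and A :: "('a \<times> 'a) set" and w :: "'a \<times> 'a \<Rightarrow> real"
  assumes "wdigraph V A w" and "i \<in> V" and "j \<in> V"
  shows "Jbar V A w i i \<ge> Jbar V A w j i
    \<and> (Jbar V A w i i > Jbar V A w j i \<longrightarrow>
           i \<in> Ktilde V A \<and> j \<notin> Kplus V A i \<and> (j, i) \<notin> A\<^sup>*)
    \<and> (Jbar V A w i i > Jbar V A w j i \<and> Jbar V A w j i > 0 \<longrightarrow>
           j \<notin> Ktilde V A \<and> (\<forall>F. max_out_forest V A F \<longrightarrow> \<not> is_root V F j))
    \<and> (Jbar V A w i j > 0 \<longrightarrow> Jbar V A w i i = Jbar V A w j i)"
proof -
  note g = assms(1) and iV = assms(2) and jV = assms(3)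
  have finV: "finite V" and AV: "A \<subseteq> V \<times> V" and wpos: "\<forall>e\<in>A. w e > 0"
    using g unfolding wdigraph_def by auto
  have finA: "finite A" using finV AV finite_subset by blast
  have mFA: "\<And>F. max_out_forest V A F \<Longrightarrow> F \<subseteq> A"
    unfolding max_out_forest_def out_forest_def by blast
  have finMF: "\<And>P. finite {F. max_out_forest V A F \<and> P F}"
  proof -
    fix P
    have "{F. max_out_forest V A F \<and> P F} \<subseteq> Pow A" using mFA by blast
    then show "finite {F. max_out_forest V A F \<and> P F}" using finA finite_subset by blast
  qed
  have finMF0: "finite {F. max_out_forest V A F}"
    using finMF[of "\<lambda>_. True"] by simp
  have wp: "\<And>F. max_out_forest V A F \<Longrightarrow> subgraph_weight w F > 0"
  proof -
    fix F assume "max_out_forest V A F"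
    then have "F \<subseteq> A" by (rule mFA)
    then show "subgraph_weight w F > 0" unfolding subgraph_weight_def
      using wpos by (intro prod_pos) blast
  qed
  define S where "S a b = (\<Sum>F\<in>{F. max_out_forest V A F \<and> in_tree_rooted V F a b}. subgraph_weight w F)" for a b
  define D where "D = (\<Sum>F\<in>{F. max_out_forest V A F}. subgraph_weight w F)"
  have J: "\<And>a b. Jbar V A w a b = S a b / D" unfolding Jbar_def S_def D_def by simp
  define OF where "OF = {G. out_forest V A G}"
  have finOF: "finite OF"
  proof -
    have "OF \<subseteq> Pow A" unfolding OF_def out_forest_def by blast
    then show ?thesis using finA finite_subset by blast
  qed
  have "out_forest V A {}" by (rule PF_out_forest[OF g]) auto
  then have "{} \<in> OF" unfolding OF_def by simp
  then have "Max (card ` OF) \<in> card ` OF" using finOF by (intro Max_in) auto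
  then obtain F0 where F0: "F0 \<in> OF" "card F0 = Max (card ` OF)" by auto
  have "max_out_forest V A F0" unfolding max_out_forest_def
  proof (intro conjI allI impI)
    show "out_forest V A F0" using F0 unfolding OF_def by simp
    fix G assume "out_forest V A G"
    then have "card G \<in> card ` OF" unfolding OF_def by simp
    then show "card G \<le> card F0" using F0 finOF by simp
  qed
  then have Dpos: "D > 0" unfolding D_def using finMF0 wp by (intro sum_pos) auto
  have T1: "\<And>F a b. in_tree_rooted V F a b \<Longrightarrow> in_tree_rooted V F b b"
    unfolding in_tree_rooted_def weak_comp_def by auto
  have Sle: "S j i \<le> S i i" unfolding S_def
    using finMF T1 wp by (intro sum_mono2) (auto intro: less_imp_le)
  have c1: "Jbar V A w i i \<ge> Jbar V A w j i" using Sle Dpos J by (simp add: divide_right_mono)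
  have pos: "\<And>a b. Jbar V A w a b > 0 \<Longrightarrow> \<exists>F. max_out_forest V A F \<and> in_tree_rooted V F a b"
  proof (rule ccontr)
    fix a b assume p: "Jbar V A w a b > 0" and n: "\<nexists>F. max_out_forest V A F \<and> in_tree_rooted V F a b"
    then have "{F. max_out_forest V A F \<and> in_tree_rooted V F a b} = {}" by blast
    then have "S a b = 0" unfolding S_def by (metis sum.empty)
    then show False using p J by simp
  qed
  have wit: "Jbar V A w i i > Jbar V A w j i \<Longrightarrow>
      \<exists>F. max_out_forest V A F \<and> in_tree_rooted V F i i \<and> \<not> in_tree_rooted V F j i"
  proof (rule ccontr)
    assume lt: "Jbar V A w i i > Jbar V A w j i" and
      n: "\<nexists>F. max_out_forest V A F \<and> in_tree_rooted V F i i \<and> \<not> in_tree_rooted V F j i"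
    then have "{F. max_out_forest V A F \<and> in_tree_rooted V F j i} = {F. max_out_forest V A F \<and> in_tree_rooted V F i i}"
      using T1 by blast
    then have "S j i = S i i" unfolding S_def by simp
    then show False using lt J by simp
  qed
  have key: "\<And>F. max_out_forest V A F \<Longrightarrow> i \<notin> snd ` F \<Longrightarrow> \<not> in_tree_rooted V F j i \<Longrightarrow>
      (\<forall>r\<in>V. r \<notin> snd ` F \<and> (r,j) \<in> F\<^sup>* \<longrightarrow> (r,i) \<notin> A\<^sup>*) \<and> (\<exists>r\<in>V. r \<notin> snd ` F \<and> (r,j) \<in> F\<^sup>*)"
  proof -
    fix F assume mF: "max_out_forest V A F" and ir: "i \<notin> snd ` F" and nt: "\<not> in_tree_rooted V F j i"
    have of: "out_forest V A F" using mF unfolding max_out_forest_def by blast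
    have A1: "\<forall>r\<in>V. r \<notin> snd ` F \<and> (r,j) \<in> F\<^sup>* \<longrightarrow> (r,i) \<notin> A\<^sup>*"
    proof (intro ballI impI notI)
      fix r assume rV: "r \<in> V" and r: "r \<notin> snd ` F \<and> (r,j) \<in> F\<^sup>*" and ri: "(r,i) \<in> A\<^sup>*"
      have "(i,r) \<in> F\<^sup>*" using maxM[OF g mF iV ir ri] .
      then have "(i,j) \<in> F\<^sup>*" using r by (meson rtrancl_trans)
      then have "in_tree_rooted V F j i" using tree_of[OF g of iV jV ir] by blast
      then show False using nt by simp
    qed
    moreover have "\<exists>r\<in>V. r \<notin> snd ` F \<and> (r,j) \<in> F\<^sup>*" using out_forest_PF[OF g of] jV by blast
    ultimately show "?thesis F" by blast
  qed
  have c2: "Jbar V A w i i > Jbar V A w j i \<longrightarrow>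
           i \<in> Ktilde V A \<and> j \<notin> Kplus V A i \<and> (j, i) \<notin> A\<^sup>*"
  proof
    assume lt: "Jbar V A w i i > Jbar V A w j i"
    then obtain F where mF: "max_out_forest V A F" and it: "in_tree_rooted V F i i"
      and nt: "\<not> in_tree_rooted V F j i" using wit by blast
    have of: "out_forest V A F" using mF unfolding max_out_forest_def by blast
    have ir: "i \<notin> snd ` F" using root_notin[OF g of it] .
    obtain r where rV: "r \<in> V" and r: "r \<notin> snd ` F" "(r,j) \<in> F\<^sup>*" and rni: "(r,i) \<notin> A\<^sup>*"
      using key[OF mF ir nt] by blast
    have rjA: "(r,j) \<in> A\<^sup>*" using r(2) rtrancl_mono[OF mFA[OF mF]] by blast
    have bi: "basis_bicomp V A (strong_comp V A i)" using basis[OF g mF iV ir] .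
    have "i \<in> strong_comp V A i" using iV unfolding strong_comp_def by simp
    then have kt: "i \<in> Ktilde V A" unfolding Ktilde_def using bi by blast
    have ji: "(j,i) \<notin> A\<^sup>*" using rjA rni by (meson rtrancl_trans)
    have "j \<notin> Kplus V A i"
    proof
      assume jk: "j \<in> Kplus V A i"
      have br: "basis_bicomp V A (strong_comp V A r)" using basis[OF g mF rV r(1)] .
      have rr: "r \<in> strong_comp V A r" using rV unfolding strong_comp_def by simp
      show False
      proof (cases "strong_comp V A r = strong_comp V A i")
        case True
        then have "i \<in> strong_comp V A r" using \<open>i \<in> strong_comp V A i\<close> by simp
        then have "(r,i) \<in> A\<^sup>*" unfolding strong_comp_def by simp
        then show False using rni by simp
      next
        case False
        then have "\<forall>u\<in>strong_comp V A r. (u, j) \<notin> A\<^sup>*" using jk br unfolding Kplus_def by blast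
        then show False using rr rjA by blast
      qed
    qed
    then show "i \<in> Ktilde V A \<and> j \<notin> Kplus V A i \<and> (j, i) \<notin> A\<^sup>*" using kt ji by blast
  qed
  have c3: "Jbar V A w i i > Jbar V A w j i \<and> Jbar V A w j i > 0 \<longrightarrow>
           j \<notin> Ktilde V A \<and> (\<forall>F. max_out_forest V A F \<longrightarrow> \<not> is_root V F j)"
  proof
    assume h: "Jbar V A w i i > Jbar V A w j i \<and> Jbar V A w j i > 0"
    then have ji: "(j,i) \<notin> A\<^sup>*" using c2 by blast
    obtain F1 where mF1: "max_out_forest V A F1" and t1: "in_tree_rooted V F1 j i" using pos h by blast
    have "(i,j) \<in> F1\<^sup>*" using t1 unfolding in_tree_rooted_def by blast
    then have ijA: "(i,j) \<in> A\<^sup>*" using rtrancl_mono[OF mFA[OF mF1]] by blast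
    have nk: "j \<notin> Ktilde V A"
    proof
      assume "j \<in> Ktilde V A"
      then obtain K where bK: "basis_bicomp V A K" and jK: "j \<in> K" unfolding Ktilde_def by blast
      have iK: "i \<in> K" using basis_closed[OF bK ijA jK] .
      obtain v where "K = strong_comp V A v" using bK unfolding basis_bicomp_def by blast
      then have "(j,v) \<in> A\<^sup>*" "(v,i) \<in> A\<^sup>*" using iK jK unfolding strong_comp_def by auto
      then show False using ji by (meson rtrancl_trans)
    qed
    moreover have "\<forall>F. max_out_forest V A F \<longrightarrow> \<not> is_root V F j"
    proof (intro allI impI notI)
      fix F assume mF: "max_out_forest V A F" and rt: "is_root V F j"
      have of: "out_forest V A F" using mF unfolding max_out_forest_def by blast
      have "j \<notin> snd ` F" using root_notin[OF g of] rt unfolding is_root_def by blast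
      then have "basis_bicomp V A (strong_comp V A j)" using basis[OF g mF jV] by blast
      moreover have "j \<in> strong_comp V A j" using jV unfolding strong_comp_def by simp
      ultimately have "j \<in> Ktilde V A" unfolding Ktilde_def by blast
      then show False using nk by simp
    qed
    ultimately show "j \<notin> Ktilde V A \<and> (\<forall>F. max_out_forest V A F \<longrightarrow> \<not> is_root V F j)" by blast
  qed
  have c4: "Jbar V A w i j > 0 \<longrightarrow> Jbar V A w i i = Jbar V A w j i"
  proof
    assume "Jbar V A w i j > 0"
    then obtain F0 where mF0: "max_out_forest V A F0" and t0: "in_tree_rooted V F0 i j" using pos by blast
    have "(j,i) \<in> F0\<^sup>*" using t0 unfolding in_tree_rooted_def by blast
    then have jiA: "(j,i) \<in> A\<^sup>*" using rtrancl_mono[OF mFA[OF mF0]] by blast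
    have "\<forall>F. max_out_forest V A F \<and> in_tree_rooted V F i i \<longrightarrow> in_tree_rooted V F j i"
    proof (intro allI impI, elim conjE, rule ccontr)
      fix F assume mF: "max_out_forest V A F" and it: "in_tree_rooted V F i i"
        and nt: "\<not> in_tree_rooted V F j i"
      have of: "out_forest V A F" using mF unfolding max_out_forest_def by blast
      have ir: "i \<notin> snd ` F" using root_notin[OF g of it] .
      obtain r where rV: "r \<in> V" and r: "r \<notin> snd ` F" "(r,j) \<in> F\<^sup>*" and rni: "(r,i) \<notin> A\<^sup>*"
        using key[OF mF ir nt] by blast
      have "(r,j) \<in> A\<^sup>*" using r(2) rtrancl_mono[OF mFA[OF mF]] by blast
      then show False using jiA rni by (meson rtrancl_trans)
    qed
    then have "{F. max_out_forest V A F \<and> in_tree_rooted V F j i} = {F. max_out_forest V A F \<and> in_tree_rooted V F i i}"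
      using T1 by blast
    then show "Jbar V A w i i = Jbar V A w j i" using J unfolding S_def by simp
  qed
  show ?thesis using c1 c2 c3 c4 by blast
qed

end
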